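(* Let $\underline t\in(\mathbb{C}^* )^4$ be such that $C_{\underline t}$ is smooth. Then every algebraic symplectic form on $C_{\underline t}$ is a constant multiple of the form $\Omega=dX_1\wedge dX_2\big/\frac{\partial R_{\underline t}}{\partial X_3}$.
   Context: With $\bar k_i=k_i-k_i^{-1}$, $\bar u_i=u_i-u_i^{-1}$ for $\underline t=(k_0,k_1,u_0,u_1)$, $R_{\underline t}=X_1X_2X_3-X_1^2-X_2^2-X_3^2+(\bar u_0\bar k_0+\bar k_1\bar u_1)X_1+(\bar u_1\bar u_0+\bar k_0\bar k_1)X_2+(\bar k_0\bar u_1+\bar k_1\bar u_0)X_3+\bar k_0^2+\bar k_1^2+\bar u_0^2+\bar u_1^2-\bar k_0\bar k_1\bar u_0\bar u_1+4$ and $C_{\underline t}=\{R_{\underline t}=0\}\subset\mathbb{C}^3$. The form $\Omega$ (defined where $\partial R_{\underline t}/\partial X_3\neq 0$) extends to a regular nowhere-vanishing 2-form on smooth $C_{\underline t}$. *)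

theory Defs
  imports Complex_Main
begin

type_synonym pt3 = "complex \<times> complex \<times> complex"

definition bar :: "complex \<Rightarrow> complex" where
  "bar k = k - inverse k"

text \<open>The polynomial R_t, with t = (k0,k1,u0,u1).\<close>
definition Rt :: "complex \<Rightarrow> complex \<Rightarrow> complex \<Rightarrow> complex \<Rightarrow> pt3 \<Rightarrow> complex" where
  "Rt k0 k1 u0 u1 p = (case p of (x1, x2, x3) \<Rightarrow>
     x1 * x2 * x3 - x1^2 - x2^2 - x3^2
     + (bar u0 * bar k0 + bar k1 * bar u1) * x1
     + (bar u1 * bar u0 + bar k0 * bar k1) * x2
     + (bar k0 * bar u1 + bar k1 * bar u0) * x3
     + (bar k0)^2 + (bar k1)^2 + (bar u0)^2 + (bar u1)^2
     - bar k0 * bar k1 * bar u0 * bar u1 + 4)"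

definition dR1 :: "complex \<Rightarrow> complex \<Rightarrow> complex \<Rightarrow> complex \<Rightarrow> pt3 \<Rightarrow> complex" where
  "dR1 k0 k1 u0 u1 p = (case p of (x1, x2, x3) \<Rightarrow>
     x2 * x3 - 2 * x1 + (bar u0 * bar k0 + bar k1 * bar u1))"
definition dR2 :: "complex \<Rightarrow> complex \<Rightarrow> complex \<Rightarrow> complex \<Rightarrow> pt3 \<Rightarrow> complex" where
  "dR2 k0 k1 u0 u1 p = (case p of (x1, x2, x3) \<Rightarrow>
     x1 * x3 - 2 * x2 + (bar u1 * bar u0 + bar k0 * bar k1))"
definition dR3 :: "complex \<Rightarrow> complex \<Rightarrow> complex \<Rightarrow> complex \<Rightarrow> pt3 \<Rightarrow> complex" where
  "dR3 k0 k1 u0 u1 p = (case p of (x1, x2, x3) \<Rightarrow>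
     x1 * x2 - 2 * x3 + (bar k0 * bar u1 + bar k1 * bar u0))"

definition Ct :: "complex \<Rightarrow> complex \<Rightarrow> complex \<Rightarrow> complex \<Rightarrow> pt3 set" where
  "Ct k0 k1 u0 u1 = {p. Rt k0 k1 u0 u1 p = 0}"

definition smooth_Ct :: "complex \<Rightarrow> complex \<Rightarrow> complex \<Rightarrow> complex \<Rightarrow> bool" where
  "smooth_Ct k0 k1 u0 u1 \<longleftrightarrow> (\<forall>p \<in> Ct k0 k1 u0 u1.
     (dR1 k0 k1 u0 u1 p, dR2 k0 k1 u0 u1 p, dR3 k0 k1 u0 u1 p) \<noteq> (0, 0, 0))"

definition tangent :: "complex \<Rightarrow> complex \<Rightarrow> complex \<Rightarrow> complex \<Rightarrow> pt3 \<Rightarrow> pt3 set" where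
  "tangent k0 k1 u0 u1 p = {v. case v of (v1, v2, v3) \<Rightarrow>
     dR1 k0 k1 u0 u1 p * v1 + dR2 k0 k1 u0 u1 p * v2 + dR3 k0 k1 u0 u1 p * v3 = 0}"

inductive poly3 :: "(pt3 \<Rightarrow> complex) \<Rightarrow> bool" where
  const: "poly3 (\<lambda>p. c)"
| coord1: "poly3 (\<lambda>p. fst p)"
| coord2: "poly3 (\<lambda>p. fst (snd p))"
| coord3: "poly3 (\<lambda>p. snd (snd p))"
| add: "poly3 f \<Longrightarrow> poly3 g \<Longrightarrow> poly3 (\<lambda>p. f p + g p)"
| mult: "poly3 f \<Longrightarrow> poly3 g \<Longrightarrow> poly3 (\<lambda>p. f p * g p)"

text \<open>A (pointwise-described) 2-form \<omega> p u v on C_t is algebraic if it is the restriction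
  to the tangent planes of C_t of a polynomial 2-form
  P1 dX2\<and>dX3 + P2 dX3\<and>dX1 + P3 dX1\<and>dX2 on C^3.\<close>
definition algebraic_2form :: "complex \<Rightarrow> complex \<Rightarrow> complex \<Rightarrow> complex \<Rightarrow>
    (pt3 \<Rightarrow> pt3 \<Rightarrow> pt3 \<Rightarrow> complex) \<Rightarrow> bool" where
  "algebraic_2form k0 k1 u0 u1 \<omega> \<longleftrightarrow>
     (\<exists>P1 P2 P3. poly3 P1 \<and> poly3 P2 \<and> poly3 P3 \<and>
       (\<forall>p \<in> Ct k0 k1 u0 u1. \<forall>u \<in> tangent k0 k1 u0 u1 p. \<forall>v \<in> tangent k0 k1 u0 u1 p.
          (case (u, v) of ((a1, a2, a3), (b1, b2, b3)) \<Rightarrow>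
             \<omega> p u v = P1 p * (a2 * b3 - a3 * b2) + P2 p * (a3 * b1 - a1 * b3)
                      + P3 p * (a1 * b2 - a2 * b1))))"

text \<open>Symplectic: nondegenerate on every tangent plane (closedness is automatic on a surface).\<close>
definition algebraic_symplectic :: "complex \<Rightarrow> complex \<Rightarrow> complex \<Rightarrow> complex \<Rightarrow>
    (pt3 \<Rightarrow> pt3 \<Rightarrow> pt3 \<Rightarrow> complex) \<Rightarrow> bool" where
  "algebraic_symplectic k0 k1 u0 u1 \<omega> \<longleftrightarrow> algebraic_2form k0 k1 u0 u1 \<omega> \<and>
     (\<forall>p \<in> Ct k0 k1 u0 u1. \<forall>u \<in> tangent k0 k1 u0 u1 p. u \<noteq> (0, 0, 0) \<longrightarrow>
        (\<exists>v \<in> tangent k0 k1 u0 u1 p. \<omega> p u v \<noteq> 0))"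

definition Omega :: "complex \<Rightarrow> complex \<Rightarrow> complex \<Rightarrow> complex \<Rightarrow> pt3 \<Rightarrow> pt3 \<Rightarrow> pt3 \<Rightarrow> complex" where
  "Omega k0 k1 u0 u1 p u v = (case (u, v) of ((a1, a2, a3), (b1, b2, b3)) \<Rightarrow>
     (a1 * b2 - a2 * b1) / dR3 k0 k1 u0 u1 p)"

end

theory Submission
  imports Defs "HOL-Computational_Algebra.Fundamental_Theorem_Algebra"
begin


lemma monomial_poly:
  fixes G :: "complex poly"
  assumes "G \<noteq> 0" "\<forall>t. t \<noteq> 0 \<longrightarrow> poly G t \<noteq> 0"
  shows "\<exists>m. \<forall>j. j \<noteq> m \<longrightarrow> coeff G j = 0"
proof -
  obtain H where H: "G = [:- 0, 1:] ^ order 0 G * H" "\<not> [:- 0, 1:] dvd H"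
    using order_decomp[OF assms(1)] by blast
  have H0: "poly H 0 \<noteq> 0" using H(2) poly_eq_0_iff_dvd by blast
  have "poly H t \<noteq> 0" for t
  proof (cases "t = 0")
    case True then show ?thesis using H0 by simp
  next
    case False
    then have "poly G t \<noteq> 0" using assms(2) by blast
    then show ?thesis by (subst (asm) H(1)) simp
  qed
  then have "constant (poly H)" using fundamental_theorem_of_algebra by blast
  then have "degree H = 0" using constant_degree by blast
  then have "H = [:coeff H 0:]" by (metis degree_0_id)
  then have "G = [:coeff H 0:] * [:0, 1:] ^ order 0 G"
    using H(1) by (metis mult.commute minus_zero)
  then have "G = monom (coeff H 0) (order 0 G)"
    by (simp add: monom_altdef)
  then show ?thesis by (metis coeff_monom)
qed

definition ev :: "complex poly poly \<Rightarrow> complex \<Rightarrow> complex \<Rightarrow> complex" where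
  "ev P l t = poly (poly P [:t:]) l"

lemma ev_add[simp]: "ev (P + Q) l t = ev P l t + ev Q l t" by (simp add: ev_def)
lemma ev_mult[simp]: "ev (P * Q) l t = ev P l t * ev Q l t" by (simp add: ev_def)
lemma ev_power[simp]: "ev (P ^ n) l t = ev P l t ^ n" by (simp add: ev_def poly_power)
lemma ev_const[simp]: "ev [:[:c:]:] l t = c" by (simp add: ev_def)
lemma ev_one[simp]: "ev 1 l t = 1" by (simp add: ev_def)
lemma ev_X[simp]: "ev [:0, 1:] l t = t" by (simp add: ev_def)
lemma ev_inner[simp]: "ev [:q:] l t = poly q l" by (simp add: ev_def)

lemma ev_map: "ev P l t = poly (map_poly (\<lambda>q. poly q l) P) t"
  unfolding ev_def
  by (induction P) (auto simp: map_poly_pCons)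

lemma ev_sum: "ev P l t = (\<Sum>j\<le>degree P. poly (coeff P j) l * t ^ j)"
proof -
  have "ev P l t = poly (\<Sum>i\<le>degree P. coeff P i * [:t:] ^ i) l"
    unfolding ev_def by (subst poly_altdef) simp
  also have "\<dots> = (\<Sum>j\<le>degree P. poly (coeff P j) l * t ^ j)"
    by (simp add: poly_sum poly_power)
  finally show ?thesis .
qed

definition Dp :: "complex poly" where "Dp = [:0, -1, 0, 1:]"
lemma poly_Dp[simp]: "poly Dp l = l * (l^2 - 1)"
  by (simp add: Dp_def algebra_simps power2_eq_square)

definition good :: "(complex \<Rightarrow> complex \<Rightarrow> complex) \<Rightarrow> bool" where
  "good g \<longleftrightarrow> (\<exists>P M N. \<forall>l t. l \<noteq> 0 \<longrightarrow> l^2 \<noteq> 1 \<longrightarrow> t \<noteq> 0 \<longrightarrow>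
      g l t * (l * (l^2 - 1))^M * t^N = ev P l t)"

lemma good_const: "good (\<lambda>l t. c)"
  unfolding good_def by (rule exI[of _ "[:[:c:]:]"], rule exI[of _ 0], rule exI[of _ 0]) simp

lemma good_l: "good (\<lambda>l t. l)"
  unfolding good_def by (rule exI[of _ "[:[:0,1:]:]"], rule exI[of _ 0], rule exI[of _ 0]) simp

lemma good_t: "good (\<lambda>l t. t)"
  unfolding good_def by (rule exI[of _ "[:0,1:]"], rule exI[of _ 0], rule exI[of _ 0]) simp

lemma good_invt: "good (\<lambda>l t. 1 / t)"
  unfolding good_def by (rule exI[of _ 1], rule exI[of _ 0], rule exI[of _ 1]) simp

lemma good_invD: "good (\<lambda>l t. 1 / (l * (l^2 - 1)))"
  unfolding good_def by (rule exI[of _ 1], rule exI[of _ 1], rule exI[of _ 0]) simp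

lemma good_add:
  assumes "good f" "good g" shows "good (\<lambda>l t. f l t + g l t)"
proof -
  obtain P1 M1 N1 where 1: "\<And>l t. l \<noteq> 0 \<Longrightarrow> l^2 \<noteq> 1 \<Longrightarrow> t \<noteq> 0 \<Longrightarrow>
      f l t * (l * (l^2 - 1))^M1 * t^N1 = ev P1 l t" using assms(1) unfolding good_def by blast
  obtain P2 M2 N2 where 2: "\<And>l t. l \<noteq> 0 \<Longrightarrow> l^2 \<noteq> 1 \<Longrightarrow> t \<noteq> 0 \<Longrightarrow>
      g l t * (l * (l^2 - 1))^M2 * t^N2 = ev P2 l t" using assms(2) unfolding good_def by blast
  let ?P = "P1 * [:Dp:]^M2 * [:0,1:]^N2 + P2 * [:Dp:]^M1 * [:0,1:]^N1"
  show ?thesis unfolding good_def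
  proof (intro exI allI impI)
    fix l t :: complex assume h: "l \<noteq> 0" "l^2 \<noteq> 1" "t \<noteq> 0"
    have "(f l t + g l t) * (l * (l^2 - 1))^(M1+M2) * t^(N1+N2)
       = (f l t * (l * (l^2 - 1))^M1 * t^N1) * (l * (l^2 - 1))^M2 * t^N2
         + (g l t * (l * (l^2 - 1))^M2 * t^N2) * (l * (l^2 - 1))^M1 * t^N1"
      by (simp add: power_add algebra_simps)
    also have "\<dots> = ev ?P l t" using 1[OF h] 2[OF h] by simp
    finally show "(f l t + g l t) * (l * (l^2 - 1))^(M1+M2) * t^(N1+N2) = ev ?P l t" .
  qed
qed

lemma good_mult:
  assumes "good f" "good g" shows "good (\<lambda>l t. f l t * g l t)"
proof -
  obtain P1 M1 N1 where 1: "\<And>l t. l \<noteq> 0 \<Longrightarrow> l^2 \<noteq> 1 \<Longrightarrow> t \<noteq> 0 \<Longrightarrow>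
      f l t * (l * (l^2 - 1))^M1 * t^N1 = ev P1 l t" using assms(1) unfolding good_def by blast
  obtain P2 M2 N2 where 2: "\<And>l t. l \<noteq> 0 \<Longrightarrow> l^2 \<noteq> 1 \<Longrightarrow> t \<noteq> 0 \<Longrightarrow>
      g l t * (l * (l^2 - 1))^M2 * t^N2 = ev P2 l t" using assms(2) unfolding good_def by blast
  show ?thesis unfolding good_def
  proof (intro exI allI impI)
    fix l t :: complex assume h: "l \<noteq> 0" "l^2 \<noteq> 1" "t \<noteq> 0"
    have "(f l t * g l t) * (l * (l^2 - 1))^(M1+M2) * t^(N1+N2)
       = (f l t * (l * (l^2 - 1))^M1 * t^N1) * (g l t * (l * (l^2 - 1))^M2 * t^N2)"
      by (simp add: power_add algebra_simps)
    also have "\<dots> = ev (P1 * P2) l t" using 1[OF h] 2[OF h] by simp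
    finally show "(f l t * g l t) * (l * (l^2 - 1))^(M1+M2) * t^(N1+N2) = ev (P1 * P2) l t" .
  qed
qed

lemma good_cong:
  assumes "good g" "\<And>l t. l \<noteq> 0 \<Longrightarrow> l^2 \<noteq> 1 \<Longrightarrow> t \<noteq> 0 \<Longrightarrow> f l t = g l t"
  shows "good f"
  using assms unfolding good_def by metis

lemma good_poly3:
  assumes "poly3 f" "good g1" "good g2" "good g3"
  shows "good (\<lambda>l t. f (g1 l t, g2 l t, g3 l t))"
  using assms(1)
proof induction
  case (const c) then show ?case by (rule good_const)
next
  case coord1 then show ?case using assms(2) by simp
next
  case coord2 then show ?case using assms(3) by simp
next
  case coord3 then show ?case using assms(4) by simp
next
  case (add f g) then show ?case using good_add by blast
next
  case (mult f g) then show ?case using good_mult by blast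
qed




lemma alg1: "(l*t - s/l) * (w::complex) - l * ((t - s) * w) = s * ((l - 1/l) * w)"
  by (simp add: algebra_simps)
lemma alg2: "(l*t - s/l) * (w::complex) - ((t - s) * w) / l = t * ((l - 1/l) * w)"
  by (simp add: algebra_simps diff_divide_distrib)
lemma alg3: "(l*(Y - Z/l) - (Y - l*Z)/l) * (w::complex) = Y * ((l - 1/l) * w)"
  by (simp add: algebra_simps diff_divide_distrib)
lemma alg4: "((Y - Z/l) - (Y - l*Z)) * (w::complex) = Z * ((l - 1/l) * w)"
  by (simp add: algebra_simps diff_divide_distrib)

context fixes A B C E :: complex begin

definition "Rg x y z = x*y*z - x^2 - y^2 - z^2 + A*x + B*y + C*z + E"
definition "aa (l::complex) = l + 1/l"
definition "ww (l::complex) = l / (l^2 - 1)"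
definition "c2 l = -(2*B + aa l * C) * ww l ^2"
definition "c3 l = -(2*C + aa l * B) * ww l ^2"
definition "kap l = Rg (aa l) (c2 l) (c3 l)"
definition "psi l s t = (aa l, c2 l + (l*t - s/l) * ww l, c3 l + (t - s) * ww l)"
definition "Np = [:4*E+B^2+C^2, 4*A+B*C, -4-E, -A, 1:]"

lemma ww_one:
  assumes "l \<noteq> 0" "l^2 \<noteq> 1"
  shows "(l - 1/l) * ww l = 1"
proof -
  have "l^2 - 1 \<noteq> 0" using assms(2) by (metis right_minus_eq)
  then have "l*l - 1 \<noteq> 0" by (simp add: power2_eq_square)
  then show ?thesis using assms(1) unfolding ww_def by (simp add: field_simps power2_eq_square)
qed

lemma ww_sq: "l \<noteq> 0 \<Longrightarrow> l^2 \<noteq> 1 \<Longrightarrow> ww l ^2 * (aa l ^2 - 4) = 1"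
proof -
  assume h: "l \<noteq> 0" "l^2 \<noteq> 1"
  have "aa l^2 - 4 = (l - 1/l)^2" using h(1) unfolding aa_def
    by (simp add: power2_eq_square field_simps)
  then have "ww l ^2 * (aa l ^2 - 4) = ((l - 1/l) * ww l)^2" by (simp add: power_mult_distrib)
  then show ?thesis using ww_one[OF h] by simp
qed

lemma center:
  assumes "l \<noteq> 0" "l^2 \<noteq> 1"
  shows "aa l * c3 l - 2 * c2 l + B = 0" "aa l * c2 l - 2 * c3 l + C = 0"
proof -
  have w: "ww l ^2 * (aa l ^2 - 4) = 1" using ww_sq assms .
  show "aa l * c3 l - 2 * c2 l + B = 0" unfolding c2_def c3_def
    using w by algebra
  show "aa l * c2 l - 2 * c3 l + C = 0" unfolding c2_def c3_def
    using w by algebra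
qed

lemma K1:
  assumes "l \<noteq> 0" "l^2 \<noteq> 1"
  shows "Rg (aa l) (c2 l + Y) (c3 l + Z) = kap l - (Y - l*Z) * (Y - Z/l)"
proof -
  note c = center[OF assms]
  have a: "aa l * l = l*l + 1" using assms(1) unfolding aa_def by (simp add: field_simps)
  have "(Y - l*Z) * (Y - Z/l) = Y^2 - aa l * Y * Z + Z^2"
    using assms(1) unfolding aa_def by (simp add: field_simps power2_eq_square)
  then show ?thesis unfolding kap_def Rg_def using c by algebra
qed

lemma K2:
  assumes "l \<noteq> 0" "l^2 \<noteq> 1"
  shows "(l*t - s/l) * ww l - l * ((t - s) * ww l) = s"
    "(l*t - s/l) * ww l - ((t - s) * ww l) / l = t"
proof -
  have "(l*t - s/l) * ww l - l * ((t - s) * ww l) = s * ((l - 1/l) * ww l)"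
    by (rule alg1)
  then show "(l*t - s/l) * ww l - l * ((t - s) * ww l) = s" using ww_one[OF assms] by simp
  have "(l*t - s/l) * ww l - ((t - s) * ww l) / l = t * ((l - 1/l) * ww l)"
    by (rule alg2)
  then show "(l*t - s/l) * ww l - ((t - s) * ww l) / l = t" using ww_one[OF assms] by simp
qed

lemma Rg_psi:
  assumes "l \<noteq> 0" "l^2 \<noteq> 1"
  shows "Rg (fst (psi l s t)) (fst (snd (psi l s t))) (snd (snd (psi l s t))) = kap l - s * t"
proof -
  have "Rg (aa l) (c2 l + (l*t - s/l) * ww l) (c3 l + (t - s) * ww l)
     = kap l - ((l*t - s/l) * ww l - l * ((t - s) * ww l)) * ((l*t - s/l) * ww l - ((t - s) * ww l) / l)"
    by (rule K1[OF assms])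
  also have "\<dots> = kap l - s * t" by (simp only: K2[OF assms])
  finally show ?thesis unfolding psi_def by (simp only: fst_conv snd_conv)
qed

lemma psi_inv:
  assumes "l \<noteq> 0" "l^2 \<noteq> 1"
  shows "psi l ((y - c2 l) - l * (z - c3 l)) ((y - c2 l) - (z - c3 l) / l) = (aa l, y, z)"
proof -
  have e: "(l*T - S/l) * ww l = Y \<and> (T - S) * ww l = Z"
    if "S = Y - l*Z" "T = Y - Z/l" for S T Y Z
  proof -
    have "(l*T - S/l) * ww l = Y * ((l - 1/l) * ww l)"
      unfolding that by (rule alg3)
    moreover have "(T - S) * ww l = Z * ((l - 1/l) * ww l)"
      unfolding that by (rule alg4)
    ultimately show ?thesis using ww_one[OF assms] by simp
  qed
  obtain S T where "S = (y - c2 l) - l * (z - c3 l)" "T = (y - c2 l) - (z - c3 l) / l" by blast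
  with e[OF this] show ?thesis unfolding psi_def by simp
qed

end



lemma quad_root: "\<exists>z::complex. z^2 + b*z + c = 0"
proof -
  have "degree [:c, b, 1:] = 2" by simp
  then have "\<not> constant (poly [:c, b, 1:])" using constant_degree by force
  then obtain z where "poly [:c, b, 1:] z = 0" using fundamental_theorem_of_algebra by blast
  then show ?thesis by (intro exI[of _ z]) (simp add: algebra_simps power2_eq_square)
qed

lemma good_uminus: "good f \<Longrightarrow> good (\<lambda>l t. - f l t)"
  by (rule good_cong[OF good_mult[OF good_const[of "-1"]]]) auto
lemma good_diff: "good f \<Longrightarrow> good g \<Longrightarrow> good (\<lambda>l t. f l t - g l t)"
  by (rule good_cong[OF good_add[OF _ good_uminus]]) auto
lemma good_power: "good f \<Longrightarrow> good (\<lambda>l t. f l t ^ n)"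
proof (induction n)
  case 0 then show ?case using good_const[of 1] by simp
next
  case (Suc n) then show ?case using good_mult[OF Suc(2) Suc(1)[OF Suc(2)]] by simp
qed
lemma good_invl: "good (\<lambda>l t. 1 / l)"
proof (rule good_cong[OF good_mult[OF good_diff[OF good_mult[OF good_l good_l] good_const[of 1]] good_invD]])
  fix l t :: complex assume "l \<noteq> 0" "l^2 \<noteq> 1"
  then have "l*l - 1 \<noteq> 0" by (metis power2_eq_square right_minus_eq)
  then show "1 / l = (l * l - 1) * (1 / (l * (l^2 - 1)))" using \<open>l \<noteq> 0\<close>
    by (simp add: field_simps power2_eq_square)
qed

context fixes A B C E :: complex begin

lemma good_ww: "good (\<lambda>l t. ww l)"
proof (rule good_cong[OF good_mult[OF good_mult[OF good_l good_l] good_invD]])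
  fix l t :: complex assume "l \<noteq> 0" "l^2 \<noteq> 1"
  then have "l^2 - 1 \<noteq> 0" by (metis right_minus_eq)
  then show "ww l = l * l * (1 / (l * (l^2 - 1)))" using \<open>l \<noteq> 0\<close> unfolding ww_def
    by (simp add: field_simps power2_eq_square)
qed

lemma good_aa: "good (\<lambda>l t. aa l)"
  unfolding aa_def by (intro good_add good_l good_invl)

lemma good_c2: "good (\<lambda>l t. c2 B C l)"
  unfolding c2_def by (intro good_mult good_uminus good_add good_const good_aa good_power good_ww)
lemma good_c3: "good (\<lambda>l t. c3 B C l)"
  unfolding c3_def by (intro good_mult good_uminus good_add good_const good_aa good_power good_ww)
lemma good_kap: "good (\<lambda>l t. kap A B C E l)"
  unfolding kap_def Rg_def
  by (intro good_mult good_uminus good_add good_diff good_const good_aa good_power good_c2 good_c3)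

lemma sym_aa: "l \<noteq> 0 \<Longrightarrow> aa (1/l) = aa l" unfolding aa_def by simp
lemma sym_ww: "l \<noteq> 0 \<Longrightarrow> l^2 \<noteq> 1 \<Longrightarrow> ww (1/l) = - ww l"
proof -
  assume h: "l \<noteq> 0" "l^2 \<noteq> 1"
  then have "l^2 - 1 \<noteq> 0" "1 - l^2 \<noteq> 0" by (metis right_minus_eq)+
  then show ?thesis using h(1) unfolding ww_def by (simp add: field_simps power2_eq_square)
qed
lemma sym_c2: "l \<noteq> 0 \<Longrightarrow> l^2 \<noteq> 1 \<Longrightarrow> c2 B C (1/l) = c2 B C l"
  unfolding c2_def using sym_aa sym_ww by simp
lemma sym_c3: "l \<noteq> 0 \<Longrightarrow> l^2 \<noteq> 1 \<Longrightarrow> c3 B C (1/l) = c3 B C l"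
  unfolding c3_def using sym_aa sym_ww by simp
lemma sym_kap: "l \<noteq> 0 \<Longrightarrow> l^2 \<noteq> 1 \<Longrightarrow> kap A B C E (1/l) = kap A B C E l"
  unfolding kap_def using sym_aa sym_c2 sym_c3 by simp
lemma sym_psi: "l \<noteq> 0 \<Longrightarrow> l^2 \<noteq> 1 \<Longrightarrow> psi B C (1/l) s t = psi B C l t s"
  unfolding psi_def using sym_aa sym_c2 sym_c3 sym_ww
  by (simp add: algebra_simps)

lemma kap_Np:
  assumes "l \<noteq> 0" "l^2 \<noteq> 1"
  shows "kap A B C E l * (4 - aa l ^2) = poly (Np A B C E) (aa l)"
proof -
  have w: "ww l ^2 * (aa l ^2 - 4) = 1" using ww_sq assms .
  show ?thesis unfolding kap_def Rg_def c2_def c3_def Np_def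
    using w by simp algebra
qed

definition "allowed l \<longleftrightarrow> l \<noteq> 0 \<and> l^2 \<noteq> 1 \<and> kap A B C E l \<noteq> 0"

lemma Np_nz: "Np A B C E \<noteq> 0"
proof
  assume "Np A B C E = 0"
  then have "coeff (Np A B C E) 4 = 0" by simp
  then show False unfolding Np_def by (simp add: numeral_eq_Suc)
qed

lemma aa_root: "l \<noteq> 0 \<Longrightarrow> poly [:1, - aa l, 1:] l = 0"
  unfolding aa_def by (simp add: field_simps)

lemma finite_nonallowed: "finite {l. \<not> allowed l}"
proof -
  have "{l. \<not> allowed l} \<subseteq> {0, 1, -1} \<union> (\<Union>a \<in> {a. poly (Np A B C E) a = 0}. {l. poly [:1, -a, 1:] l = 0})"
  proof
    fix l assume "l \<in> {l. \<not> allowed l}"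
    then have na: "\<not> allowed l" by simp
    show "l \<in> {0, 1, -1} \<union> (\<Union>a \<in> {a. poly (Np A B C E) a = 0}. {l. poly [:1, -a, 1:] l = 0})"
    proof (cases "l = 0 \<or> l^2 = 1")
      case True
      then have "l = 0 \<or> l = 1 \<or> l = -1" using power2_eq_1_iff by blast
      then show ?thesis by blast
    next
      case False
      then have h: "l \<noteq> 0" "l^2 \<noteq> 1" by auto
      then have "kap A B C E l = 0" using na unfolding allowed_def by blast
      then have "poly (Np A B C E) (aa l) = 0" using kap_Np[OF h] by simp
      then show ?thesis using aa_root[OF h(1)] by blast
    qed
  qed
  moreover have "finite ({0, 1, -1} \<union> (\<Union>a \<in> {a. poly (Np A B C E) a = 0}. {l. poly [:1, -a, 1:] l = 0}))"
  proof -
    have "\<And>a::complex. finite {l. poly [:1, -a, 1:] l = 0}" by (rule poly_roots_finite) simp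
    then show ?thesis using poly_roots_finite[OF Np_nz] by blast
  qed
  ultimately show ?thesis by (rule finite_subset)
qed

end



context fixes A B C E :: complex begin

definition "phi l t = psi B C l t (kap A B C E l / t)"

lemma good_div_t: "good g \<Longrightarrow> good (\<lambda>l t. g l t / t)"
  by (rule good_cong[OF good_mult[OF _ good_invt]]) auto
lemma good_div_l: "good g \<Longrightarrow> good (\<lambda>l t. g l t / l)"
  by (rule good_cong[OF good_mult[OF _ good_invl]]) auto

lemma good_phi:
  "good (\<lambda>l t. fst (phi l t))" "good (\<lambda>l t. fst (snd (phi l t)))" "good (\<lambda>l t. snd (snd (phi l t)))"
  unfolding phi_def psi_def fst_conv snd_conv
  by (intro good_add good_mult good_diff good_div_t good_div_l good_aa good_c2 good_c3 good_kap good_ww good_l good_t)+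

lemma good_F: "poly3 f \<Longrightarrow> good (\<lambda>l t. f (phi l t))"
  using good_poly3[OF _ good_phi] by simp

lemma Rg_phi:
  assumes "allowed A B C E l" "t \<noteq> 0"
  shows "Rg A B C E (fst (phi l t)) (fst (snd (phi l t))) (snd (snd (phi l t))) = 0"
  using assms Rg_psi[of l A B C E t "kap A B C E l / t"] unfolding phi_def allowed_def by simp

lemma phi_sym:
  assumes "allowed A B C E l" "t \<noteq> 0"
  shows "phi (1/l) (kap A B C E l / t) = phi l t"
proof -
  have h: "l \<noteq> 0" "l^2 \<noteq> 1" "kap A B C E l \<noteq> 0" using assms(1) unfolding allowed_def by auto
  have "phi (1/l) (kap A B C E l / t) = psi B C (1/l) (kap A B C E l / t) t"
    unfolding phi_def using sym_kap[OF h(1,2)] h(3) assms(2) by simp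
  also have "\<dots> = phi l t" unfolding phi_def using sym_psi[OF h(1,2)] by simp
  finally show ?thesis .
qed

lemma allowed_inv: "allowed A B C E l \<Longrightarrow> allowed A B C E (1/l)"
  unfolding allowed_def using sym_kap by (auto simp: power_divide)

lemma pow2_inj: "(2::complex) ^ m = 2 ^ n \<Longrightarrow> m = n"
proof -
  assume "(2::complex) ^ m = 2 ^ n"
  then have "of_nat (2 ^ m) = (of_nat (2 ^ n) :: complex)" by simp
  then have "(2::nat) ^ m = 2 ^ n" using of_nat_eq_iff by blast
  then show "m = n" by simp
qed

lemma fiber_phi_const:
  assumes f: "poly3 f" and nz: "\<And>x y z. Rg A B C E x y z = 0 \<Longrightarrow> f (x, y, z) \<noteq> 0"
  shows "\<And>l t. allowed A B C E l \<Longrightarrow> t \<noteq> 0 \<Longrightarrow> f (phi l t) = f (phi l 1)"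
proof -
  define F where "F l t = f (phi l t)" for l t
  have Fnz: "F l t \<noteq> 0" if "allowed A B C E l" "t \<noteq> 0" for l t
    using nz[OF Rg_phi[OF that]] unfolding F_def by simp
  obtain P M N where PMN: "\<And>l t. l \<noteq> 0 \<Longrightarrow> l^2 \<noteq> 1 \<Longrightarrow> t \<noteq> 0 \<Longrightarrow>
      F l t * (l * (l^2 - 1))^M * t^N = ev P l t"
    using good_F[OF f] unfolding good_def F_def by blast
  have inf: "infinite (UNIV :: complex set)" by (rule infinite_UNIV_char_0)
  obtain l1 where l1: "allowed A B C E l1"
    using ex_new_if_finite[OF inf finite_nonallowed[of A B C E]] by blast
  have D1: "l1 \<noteq> 0" "l1^2 \<noteq> 1" using l1 unfolding allowed_def by auto
  have Dnz: "(l * (l^2 - 1))^M \<noteq> 0" if "l \<noteq> 0" "l^2 \<noteq> 1" for l :: complex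
    using that by (simp add: right_minus_eq)
  have "ev P l1 1 \<noteq> 0" using PMN[OF D1, of 1] Fnz[OF l1, of 1] Dnz[OF D1]
    by (metis mult_eq_0_iff one_neq_zero power_one)
  then have Pnz: "P \<noteq> 0" by (auto simp: ev_def)
  define S where "S = {j. j \<le> degree P \<and> coeff P j \<noteq> 0}"
  have finS: "finite S" unfolding S_def by simp
  define Q where "Q = (\<Prod>j\<in>S. coeff P j)"
  have Qnz: "Q \<noteq> 0" unfolding Q_def using finS by (simp add: S_def)
  obtain l0 where l0: "l0 \<notin> {l. \<not> allowed A B C E l} \<union> {l. poly Q l = 0}"
    using ex_new_if_finite[OF inf] finite_nonallowed[of A B C E] poly_roots_finite[OF Qnz]
    by (metis finite_Un)
  have al0: "allowed A B C E l0" and pQ: "poly Q l0 \<noteq> 0" using l0 by auto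
  have D0: "l0 \<noteq> 0" "l0^2 \<noteq> 1" using al0 unfolding allowed_def by auto
  have cS: "poly (coeff P j) l0 \<noteq> 0" if "j \<in> S" for j
    using pQ that finS unfolding Q_def by (auto simp: poly_prod prod_zero_iff)
  define G where "G = map_poly (\<lambda>q. poly q l0) P"
  have pG: "poly G t = ev P l0 t" for t unfolding G_def by (simp add: ev_map)
  have Gt: "poly G t \<noteq> 0" if "t \<noteq> 0" for t
    using pG PMN[OF D0 that] Fnz[OF al0 that] Dnz[OF D0] that by (metis mult_eq_0_iff power_not_zero)
  then have "poly G 1 \<noteq> 0" by simp
  then have "G \<noteq> 0" by auto
  then obtain m where m: "\<And>j. j \<noteq> m \<Longrightarrow> coeff G j = 0" using monomial_poly Gt by blast
  have cP: "coeff P j = 0" if "j \<noteq> m" for j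
  proof (rule ccontr)
    assume "coeff P j \<noteq> 0"
    then have "j \<in> S" unfolding S_def using le_degree by blast
    then have "poly (coeff P j) l0 \<noteq> 0" by (rule cS)
    moreover have "coeff G j = poly (coeff P j) l0" unfolding G_def by (simp add: coeff_map_poly)
    ultimately show False using m[OF that] by simp
  qed
  have evP: "ev P l t = poly (coeff P m) l * t ^ m" for l t
  proof -
    have "ev P l t = (\<Sum>j\<le>degree P. if j = m then poly (coeff P m) l * t ^ m else 0)"
      unfolding ev_sum by (rule sum.cong) (auto simp: cP)
    also have "\<dots> = poly (coeff P m) l * t ^ m"
      by (cases "m \<le> degree P") (auto simp: coeff_eq_0)
    finally show ?thesis .
  qed
  define p where "p l = poly (coeff P m) l" for l
  have main: "F l t * (l * (l^2 - 1))^M * t^N = p l * t^m" if "l \<noteq> 0" "l^2 \<noteq> 1" "t \<noteq> 0" for l t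
    using PMN[OF that] evP unfolding p_def by simp
  fix l t :: complex
  assume al: "allowed A B C E l" and t: "t \<noteq> 0"
  have Dl: "l \<noteq> 0" "l^2 \<noteq> 1" and k: "kap A B C E l \<noteq> 0" using al unfolding allowed_def by auto
  have al': "allowed A B C E (1/l)" using allowed_inv[OF al] .
  have Dl': "1/l \<noteq> 0" "(1/l)^2 \<noteq> 1" using al' unfolding allowed_def by auto
  define k where "k = kap A B C E l"
  define d where "d = (l * (l^2 - 1))^M"
  define d' where "d' = ((1/l) * ((1/l)^2 - 1))^M"
  have dnz: "d \<noteq> 0" "d' \<noteq> 0" unfolding d_def d'_def using Dnz[OF Dl] Dnz[OF Dl'] by auto
  have knz: "k \<noteq> 0" using k unfolding k_def .
  have key: "d * p (1/l) * k^m * s^(2*N) = p l * d' * k^N * s^(2*m)" if s: "s \<noteq> 0" for s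
  proof -
    have e1: "F l s * d * s^N = p l * s^m" using main[OF Dl s] unfolding d_def .
    have ks: "k / s \<noteq> 0" using knz s by simp
    have e2: "F l s * d' * (k/s)^N = p (1/l) * (k/s)^m"
      using main[OF Dl' ks] phi_sym[OF al s] unfolding d'_def F_def k_def by simp
    have e2': "F l s * d' * k^N * s^m = p (1/l) * k^m * s^N"
    proof -
      have "F l s * d' * k^N * s^m = (F l s * d' * (k/s)^N) * s^N * s^m"
        using s by (simp add: power_divide field_simps)
      also have "\<dots> = p (1/l) * (k/s)^m * s^N * s^m" using e2 by simp
      also have "\<dots> = p (1/l) * k^m * s^N" using s by (simp add: power_divide field_simps)
      finally show ?thesis .
    qed
    have Fnz': "F l s \<noteq> 0" using Fnz[OF al s] .
    have "F l s * (d * p (1/l) * k^m * s^(2*N)) = (F l s * d * s^N) * (p (1/l) * k^m * s^N)"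
      by (simp only: mult_2 power_add) (simp add: algebra_simps)
    also have "\<dots> = (p l * s^m) * (F l s * d' * k^N * s^m)" using e1 e2' by simp
    also have "\<dots> = F l s * (p l * d' * k^N * s^(2*m))" by (simp only: mult_2 power_add) (simp add: algebra_simps)
    finally show ?thesis using Fnz' by simp
  qed
  have Fd1: "F l 1 * d = p l" using main[OF Dl one_neq_zero] unfolding d_def by simp
  have pnz: "p l \<noteq> 0" using Fd1 Fnz[OF al one_neq_zero] dnz by (metis mult_eq_0_iff)
  have c0: "p l * d' * k^N \<noteq> 0" using pnz dnz knz by simp
  have "d * p (1/l) * k^m = p l * d' * k^N" using key[of 1] by simp
  then have "(p l * d' * k^N) * 2^(2*N) = (p l * d' * k^N) * 2^(2*m)" using key[of 2] by simp
  then have "(2::complex)^(2*N) = 2^(2*m)" using c0 knz by simp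
  then have "2*N = 2*m" by (rule pow2_inj)
  then have mN: "m = N" by simp
  have "F l t * d * t^N = p l * t^N" using main[OF Dl t] mN unfolding d_def by simp
  then have Ft: "F l t = p l / d" using t dnz by (simp add: field_simps)
  have "F l 1 * d = p l" using main[OF Dl one_neq_zero] mN unfolding d_def by simp
  then have "F l 1 = p l / d" using dnz by (simp add: field_simps)
  with Ft show "f (phi l t) = f (phi l 1)" unfolding F_def by simp
qed

end



lemma poly3_comp:
  assumes "poly3 f" "poly3 g1" "poly3 g2" "poly3 g3"
  shows "poly3 (\<lambda>p. f (g1 p, g2 p, g3 p))"
  using assms(1)
proof induction
  case (const c) then show ?case by (rule poly3.const)
next
  case coord1 then show ?case using assms(2) by simp
next
  case coord2 then show ?case using assms(3) by simp
next
  case coord3 then show ?case using assms(4) by simp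
next
  case (add f g) then show ?case using poly3.add by blast
next
  case (mult f g) then show ?case using poly3.mult by blast
qed

lemma poly3_curve:
  assumes "poly3 f"
  shows "\<exists>P. \<forall>\<tau>. f (poly p1 \<tau>, poly p2 \<tau>, poly p3 \<tau>) = poly P \<tau>"
  using assms
proof induction
  case (const c) then show ?case by (intro exI[of _ "[:c:]"]) simp
next
  case coord1 then show ?case by auto
next
  case coord2 then show ?case by auto
next
  case coord3 then show ?case by auto
next
  case (add f g)
  then obtain P Q where "\<forall>\<tau>. f (poly p1 \<tau>, poly p2 \<tau>, poly p3 \<tau>) = poly P \<tau>"
    "\<forall>\<tau>. g (poly p1 \<tau>, poly p2 \<tau>, poly p3 \<tau>) = poly Q \<tau>" by blast
  then show ?case by (intro exI[of _ "P + Q"]) simp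
next
  case (mult f g)
  then obtain P Q where "\<forall>\<tau>. f (poly p1 \<tau>, poly p2 \<tau>, poly p3 \<tau>) = poly P \<tau>"
    "\<forall>\<tau>. g (poly p1 \<tau>, poly p2 \<tau>, poly p3 \<tau>) = poly Q \<tau>" by blast
  then show ?case by (intro exI[of _ "P * Q"]) simp
qed

lemma finite_preimage_poly:
  fixes p :: "complex poly"
  assumes "degree p > 0" "finite S"
  shows "finite {\<tau>. poly p \<tau> \<in> S}"
proof -
  have "{\<tau>. poly p \<tau> \<in> S} = (\<Union>b\<in>S. {\<tau>. poly (p - [:b:]) \<tau> = 0})" by auto
  moreover have "p - [:b:] \<noteq> 0" for b
  proof
    assume "p - [:b:] = 0"
    then have "p = [:b:]" by simp
    then show False using assms(1) by simp
  qed
  then have "\<And>b. finite {\<tau>. poly (p - [:b:]) \<tau> = 0}" using poly_roots_finite by blast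
  then have "finite (\<Union>b\<in>S. {\<tau>. poly (p - [:b:]) \<tau> = 0})" using assms(2) by blast
  ultimately show ?thesis by simp
qed

lemma poly_eq_cofinite:
  fixes P :: "complex poly"
  assumes "finite T" "\<And>\<tau>. \<tau> \<notin> T \<Longrightarrow> poly P \<tau> = K"
  shows "poly P x = K"
proof -
  have "{\<tau>. poly (P - [:K:]) \<tau> = 0} \<supseteq> - T" using assms(2) by auto
  then have "infinite {\<tau>. poly (P - [:K:]) \<tau> = 0}"
    using assms(1) infinite_UNIV_char_0 finite_subset by (metis Compl_eq_Diff_UNIV finite_Diff2 )
  then have "P - [:K:] = 0" using poly_roots_finite by blast
  then show ?thesis by simp
qed

context fixes A B C E :: complex begin

lemma root_z: "\<exists>z. Rg A B C E a b z = 0"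
proof -
  obtain z where "z^2 + (-(a*b + C))*z + (a^2 + b^2 - A*a - B*b - E) = 0" using quad_root by blast
  then show ?thesis unfolding Rg_def by (intro exI[of _ z]) (simp add: algebra_simps power2_eq_square)
qed

lemma root_y: "\<exists>y. Rg A B C E a y c = 0"
proof -
  obtain y where "y^2 + (-(a*c + B))*y + (a^2 + c^2 - A*a - C*c - E) = 0" using quad_root by blast
  then show ?thesis unfolding Rg_def by (intro exI[of _ y]) (simp add: algebra_simps power2_eq_square)
qed

lemma good_l_exists:
  assumes "a^2 \<noteq> 4"
  obtains l where "l \<noteq> 0" "l^2 \<noteq> 1" "aa l = a"
proof -
  obtain l where l: "l^2 + (-a)*l + 1 = 0" using quad_root by blast
  then have l0: "l \<noteq> 0" by auto
  have al: "aa l = a" using l l0 unfolding aa_def by (simp add: field_simps power2_eq_square)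
  have "l^2 \<noteq> 1"
  proof
    assume h: "l^2 = 1"
    then have "a * l = 2" using l by (simp add: algebra_simps)
    then have "a^2 * l^2 = 4" by (metis power_mult_distrib numeral_Bit0 power2_eq_square mult_2 numeral_One one_add_one)
    then show False using h assms by simp
  qed
  then show ?thesis using that l0 al by blast
qed

lemma point_phi:
  assumes "allowed A B C E l" "Rg A B C E (aa l) y z = 0"
  shows "\<exists>\<tau>. \<tau> \<noteq> 0 \<and> phi A B C E l \<tau> = (aa l, y, z)"
proof -
  have h: "l \<noteq> 0" "l^2 \<noteq> 1" "kap A B C E l \<noteq> 0" using assms(1) unfolding allowed_def by auto
  define s where "s = (y - c2 B C l) - l * (z - c3 B C l)"
  define t where "t = (y - c2 B C l) - (z - c3 B C l) / l"
  have ps: "psi B C l s t = (aa l, y, z)" unfolding s_def t_def by (rule psi_inv[OF h(1,2)])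
  have "kap A B C E l - s * t = 0" using Rg_psi[OF h(1,2), of A B C E s t] ps assms(2) by simp
  then have st: "s * t = kap A B C E l" by simp
  then have s0: "s \<noteq> 0" using h(3) by auto
  then have "t = kap A B C E l / s" using st by (simp add: field_simps)
  then show ?thesis using ps s0 unfolding phi_def by blast
qed

definition "Bad = {a. a^2 = 4 \<or> poly (Np A B C E) a = 0}"

lemma finite_Bad: "finite Bad"
proof -
  have "Bad \<subseteq> {a. poly [:-4, 0, 1:] a = 0} \<union> {a. poly (Np A B C E) a = 0}"
    unfolding Bad_def by (auto simp: power2_eq_square)
  moreover have "finite ({a. poly [:-4, 0, 1:] a = 0} \<union> {a. poly (Np A B C E) a = 0})"
    using poly_roots_finite[OF Np_nz] poly_roots_finite[of "[:-4, 0, 1:] :: complex poly"] by simp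
  ultimately show ?thesis by (rule finite_subset)
qed

lemma fiber_const:
  assumes f: "poly3 f" and nz: "\<And>x y z. Rg A B C E x y z = 0 \<Longrightarrow> f (x, y, z) \<noteq> 0"
    and a: "a \<notin> Bad" and p: "Rg A B C E a y z = 0" "Rg A B C E a y' z' = 0"
  shows "f (a, y, z) = f (a, y', z')"
proof -
  have a4: "a^2 \<noteq> 4" and aN: "poly (Np A B C E) a \<noteq> 0" using a unfolding Bad_def by auto
  obtain l where l: "l \<noteq> 0" "l^2 \<noteq> 1" "aa l = a" using good_l_exists[OF a4] by blast
  have "4 - aa l ^2 \<noteq> 0" using a4 l(3) by auto
  then have "kap A B C E l \<noteq> 0" using kap_Np[OF l(1,2), of A B C E] aN l(3) by auto
  then have al: "allowed A B C E l" using l unfolding allowed_def by simp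
  obtain t1 where t1: "t1 \<noteq> 0" "phi A B C E l t1 = (a, y, z)" using point_phi[OF al] p(1) l(3) by blast
  obtain t2 where t2: "t2 \<noteq> 0" "phi A B C E l t2 = (a, y', z')" using point_phi[OF al] p(2) l(3) by blast
  show ?thesis using fiber_phi_const[OF f nz al t1(1)] fiber_phi_const[OF f nz al t2(1)] t1(2) t2(2)
    by metis
qed

lemma bad_curve:
  assumes p: "Rg A B C E a y0 z0 = 0" and a: "a \<in> Bad"
  shows "\<exists>p2 p3. poly p2 0 = y0 \<and> poly p3 0 = z0 \<and> (\<forall>\<tau>. Rg A B C E a (poly p2 \<tau>) (poly p3 \<tau>) = 0)
           \<and> (degree p2 > 0 \<or> degree p3 > 0)"
proof (cases "a^2 = 4")
  case True
  define sg where "sg = a / 2"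
  have s2: "sg^2 = 1" and a2: "a = 2 * sg" using True unfolding sg_def by (auto simp: power_divide)
  define E' where "E' = -(a^2) + A * a + E"
  have Rq: "Rg A B C E a y z = -((y - sg * z)^2) + B * (y - sg * z) + (B * sg + C) * z + E'" for y z
    unfolding Rg_def E'_def a2 using s2 by (simp add: algebra_simps power2_eq_square)
  define u0 where "u0 = y0 - sg * z0"
  define bt where "bt = B * sg + C"
  have p0: "-(u0^2) + B * u0 + bt * z0 + E' = 0" using p Rq unfolding u0_def bt_def by simp
  show ?thesis
  proof (cases "bt = 0")
    case True
    define p2 where "p2 = [:y0, sg:]"
    define p3 where "p3 = [:z0, 1:]"
    have "Rg A B C E a (poly p2 \<tau>) (poly p3 \<tau>) = 0" for \<tau>
      unfolding Rq p2_def p3_def using p0 True s2 unfolding u0_def bt_def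
      by (simp add: algebra_simps power2_eq_square) algebra
    moreover have "degree p3 > 0" unfolding p3_def by simp
    ultimately show ?thesis unfolding p2_def p3_def by (intro exI[of _ p2] exI[of _ p3]) (simp add: p2_def p3_def)
  next
    case False
    define q where "q = [:u0, 1:]"
    define p3 where "p3 = smult (1/bt) (q^2 - smult B q - [:E':])"
    define p2 where "p2 = q + smult sg p3"
    have pq: "poly p3 \<tau> * bt = (u0 + \<tau>)^2 - B * (u0 + \<tau>) - E'" for \<tau>
      unfolding p3_def q_def using False by (simp add: field_simps power2_eq_square)
    have "Rg A B C E a (poly p2 \<tau>) (poly p3 \<tau>) = 0" for \<tau>
    proof -
      have "poly p2 \<tau> - sg * poly p3 \<tau> = u0 + \<tau>" unfolding p2_def q_def by simp
      then show ?thesis unfolding Rq bt_def[symmetric] using pq[of \<tau>] by (simp add: algebra_simps)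
    qed
    moreover have "poly p3 0 = z0"
    proof -
      have "poly p3 0 * bt = u0^2 - B * u0 - E'" using pq[of 0] by simp
      also have "\<dots> = z0 * bt" using p0 by (simp add: algebra_simps)
      finally have "poly p3 0 * bt = z0 * bt" .
      then show ?thesis using False by simp
    qed
    moreover have "poly p2 0 = y0" using calculation(2) unfolding p2_def q_def u0_def by simp
    moreover have "degree p3 > 0"
    proof -
      have "coeff p3 2 = 1/bt" unfolding p3_def q_def by (simp add: power2_eq_square numeral_eq_Suc)
      then have "coeff p3 2 \<noteq> 0" using False by simp
      then have "2 \<le> degree p3" using le_degree by blast
      then show ?thesis by simp
    qed
    ultimately show ?thesis by blast
  qed
next
  case False
  then have aN: "poly (Np A B C E) a = 0" using a unfolding Bad_def by auto
  obtain l where l: "l \<noteq> 0" "l^2 \<noteq> 1" "aa l = a" using good_l_exists[OF False] by blast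
  have "4 - aa l ^2 \<noteq> 0" using False l(3) by auto
  then have k0: "kap A B C E l = 0" using kap_Np[OF l(1,2), of A B C E] aN l(3) by auto
  have w0: "ww l \<noteq> 0" using l(1,2) unfolding ww_def by (simp add: right_minus_eq)
  define s where "s = (y0 - c2 B C l) - l * (z0 - c3 B C l)"
  define t where "t = (y0 - c2 B C l) - (z0 - c3 B C l) / l"
  have ps: "psi B C l s t = (aa l, y0, z0)" unfolding s_def t_def by (rule psi_inv[OF l(1,2)])
  have "kap A B C E l - s * t = 0" using Rg_psi[OF l(1,2), of A B C E s t] ps p l(3) by simp
  then have st: "s = 0 \<or> t = 0" using k0 by simp
  have Rps: "Rg A B C E a (fst (snd (psi B C l s' t'))) (snd (snd (psi B C l s' t'))) = 0"
    if "s' * t' = 0" for s' t'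
    using Rg_psi[OF l(1,2), of A B C E s' t'] that k0 l(3) unfolding psi_def by simp
  show ?thesis
  proof (cases "s = 0")
    case True
    define p2 where "p2 = [:c2 B C l + l * t * ww l, l * ww l:]"
    define p3 where "p3 = [:c3 B C l + t * ww l, ww l:]"
    have e: "fst (snd (psi B C l 0 (t + \<tau>))) = poly p2 \<tau>" "snd (snd (psi B C l 0 (t + \<tau>))) = poly p3 \<tau>" for \<tau>
      unfolding psi_def p2_def p3_def by (simp_all add: algebra_simps)
    have "Rg A B C E a (poly p2 \<tau>) (poly p3 \<tau>) = 0" for \<tau>
      using Rps[of 0 "t + \<tau>"] e by simp
    moreover have "poly p2 0 = y0" "poly p3 0 = z0" using e[of 0] ps True by simp_all
    moreover have "degree p3 > 0" unfolding p3_def using w0 by simp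
    ultimately show ?thesis by blast
  next
    case False
    then have t0: "t = 0" using st by simp
    define p2 where "p2 = [:c2 B C l - s / l * ww l, - ww l / l:]"
    define p3 where "p3 = [:c3 B C l - s * ww l, - ww l:]"
    have e: "fst (snd (psi B C l (s + \<tau>) 0)) = poly p2 \<tau>" "snd (snd (psi B C l (s + \<tau>) 0)) = poly p3 \<tau>" for \<tau>
      unfolding psi_def p2_def p3_def by (simp_all add: algebra_simps diff_divide_distrib add_divide_distrib)
    have "Rg A B C E a (poly p2 \<tau>) (poly p3 \<tau>) = 0" for \<tau>
      using Rps[of "s + \<tau>" 0] e by simp
    moreover have "poly p2 0 = y0" "poly p3 0 = z0" using e[of 0] ps t0 by simp_all
    moreover have "degree p3 > 0" unfolding p3_def using w0 by simp
    ultimately show ?thesis by blast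
  qed
qed

end



lemma Rg_swap12: "Rg B A C E y x z = Rg A B C E x y z"
  unfolding Rg_def by (simp add: algebra_simps)
lemma Rg_rot: "Rg C A B E z x y = Rg A B C E x y z"
  unfolding Rg_def by (simp add: algebra_simps)

lemma units_const:
  assumes f: "poly3 f" and nz: "\<And>x y z. Rg A B C E x y z = 0 \<Longrightarrow> f (x, y, z) \<noteq> 0"
  shows "\<exists>K. \<forall>x y z. Rg A B C E x y z = 0 \<longrightarrow> f (x, y, z) = K"
proof -
  define f2 where "f2 p = f (fst (snd p), fst p, snd (snd p))" for p :: "complex \<times> complex \<times> complex"
  define f3 where "f3 p = f (fst (snd p), snd (snd p), fst p)" for p :: "complex \<times> complex \<times> complex"
  have pf2: "poly3 f2" unfolding f2_def by (rule poly3_comp[OF f poly3.coord2 poly3.coord1 poly3.coord3])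
  have pf3: "poly3 f3" unfolding f3_def by (rule poly3_comp[OF f poly3.coord2 poly3.coord3 poly3.coord1])
  have nz2: "f2 (x, y, z) \<noteq> 0" if "Rg B A C E x y z = 0" for x y z
  proof -
    have "Rg A B C E y x z = 0" using that Rg_swap12[where A=A and B=B and x=y and y=x and z=z] by simp
    then show ?thesis using nz[of y x z] unfolding f2_def by simp
  qed
  have nz3: "f3 (x, y, z) \<noteq> 0" if "Rg C A B E x y z = 0" for x y z
  proof -
    have "Rg A B C E y z x = 0" using that Rg_rot[where A=A and B=B and C=C and x=y and y=z and z=x] by simp
    then show ?thesis using nz[of y z x] unfolding f3_def by simp
  qed
  define Bad1 where "Bad1 = Bad A B C E"
  define Bad2 where "Bad2 = Bad B A C E"
  define Bad3 where "Bad3 = Bad C A B E"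
  have fin: "finite Bad1" "finite Bad2" "finite Bad3" unfolding Bad1_def Bad2_def Bad3_def
    by (rule finite_Bad)+
  have FC1: "f (a, y, z) = f (a, y', z')" if "a \<notin> Bad1" "Rg A B C E a y z = 0" "Rg A B C E a y' z' = 0"
    for a y z y' z' using fiber_const[OF f nz] that unfolding Bad1_def by blast
  have FC2: "f (x, b, z) = f (x', b, z')" if "b \<notin> Bad2" "Rg A B C E x b z = 0" "Rg A B C E x' b z' = 0"
    for x b z x' z'
  proof -
    have r: "Rg B A C E b x z = 0" "Rg B A C E b x' z' = 0"
      using that(2,3) Rg_swap12[where A=A and B=B and x=x and y=b and z=z] Rg_swap12[where A=A and B=B and x=x' and y=b and z=z'] by simp_all
    have bb: "b \<notin> Bad B A C E" using that(1) unfolding Bad2_def .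
    have "f2 (b, x, z) = f2 (b, x', z')"
      by (rule fiber_const[where A=B and B=A and C=C and E=E, OF pf2 nz2 bb r])
    then show ?thesis unfolding f2_def by simp
  qed
  have FC3: "f (x, y, c) = f (x', y', c)" if "c \<notin> Bad3" "Rg A B C E x y c = 0" "Rg A B C E x' y' c = 0"
    for x y c x' y'
  proof -
    have r: "Rg C A B E c x y = 0" "Rg C A B E c x' y' = 0"
      using that(2,3) Rg_rot[where A=A and B=B and C=C and x=x and y=y and z=c] Rg_rot[where A=A and B=B and C=C and x=x' and y=y' and z=c] by simp_all
    have cc: "c \<notin> Bad C A B E" using that(1) unfolding Bad3_def .
    have "f3 (c, x, y) = f3 (c, x', y')"
      by (rule fiber_const[where A=C and B=A and C=B and E=E, OF pf3 nz3 cc r])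
    then show ?thesis unfolding f3_def by simp
  qed
  have inf: "infinite (UNIV :: complex set)" by (rule infinite_UNIV_char_0)
  obtain a0 where a0: "a0 \<notin> Bad1" using ex_new_if_finite[OF inf fin(1)] by blast
  obtain b0 where b0: "b0 \<notin> Bad2" using ex_new_if_finite[OF inf fin(2)] by blast
  obtain z00 where z00: "Rg A B C E a0 b0 z00 = 0" using root_z by blast
  define K where "K = f (a0, b0, z00)"
  have L1: "f (x, y, z) = K" if "x \<notin> Bad1" "Rg A B C E x y z = 0" for x y z
  proof -
    obtain z1 where z1: "Rg A B C E x b0 z1 = 0" using root_z by blast
    have "f (x, y, z) = f (x, b0, z1)" using FC1[OF that(1) that(2) z1] .
    also have "\<dots> = K" unfolding K_def using FC2[OF b0 z1 z00] .
    finally show ?thesis .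
  qed
  have L2: "f (x, y, z) = K" if "y \<notin> Bad2" "Rg A B C E x y z = 0" for x y z
  proof -
    obtain z2 where z2: "Rg A B C E a0 y z2 = 0" using root_z by blast
    have "f (x, y, z) = f (a0, y, z2)" using FC2[OF that(1) that(2) z2] .
    also have "\<dots> = K" using L1[OF a0 z2] .
    finally show ?thesis .
  qed
  have L3: "f (x, y, z) = K" if "z \<notin> Bad3" "Rg A B C E x y z = 0" for x y z
  proof -
    obtain y3 where y3: "Rg A B C E a0 y3 z = 0" using root_y by blast
    have "f (x, y, z) = f (a0, y3, z)" using FC3[OF that(1) that(2) y3] .
    also have "\<dots> = K" using L1[OF a0 y3] .
    finally show ?thesis .
  qed
  have "f (x, y, z) = K" if p: "Rg A B C E x y z = 0" for x y z
  proof (cases "x \<in> Bad1")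
    case False then show ?thesis using L1 p by blast
  next
    case True
    obtain p2 p3 where c: "poly p2 0 = y" "poly p3 0 = z"
      "\<And>\<tau>. Rg A B C E x (poly p2 \<tau>) (poly p3 \<tau>) = 0" "degree p2 > 0 \<or> degree p3 > 0"
      using bad_curve[OF p True[unfolded Bad1_def]] by blast
    obtain P where P: "\<And>\<tau>. f (poly [:x:] \<tau>, poly p2 \<tau>, poly p3 \<tau>) = poly P \<tau>"
      using poly3_curve[OF f] by blast
    define T where "T = (if degree p2 > 0 then {\<tau>. poly p2 \<tau> \<in> Bad2} else {\<tau>. poly p3 \<tau> \<in> Bad3})"
    have finT: "finite T" unfolding T_def using c(4) finite_preimage_poly fin(2,3) by auto
    have "poly P \<tau> = K" if "\<tau> \<notin> T" for \<tau>
    proof -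
      have "poly p2 \<tau> \<notin> Bad2 \<or> poly p3 \<tau> \<notin> Bad3" using that c(4) unfolding T_def by (auto split: if_splits)
      then have "f (x, poly p2 \<tau>, poly p3 \<tau>) = K" using L2 L3 c(3) by blast
      then show ?thesis using P[of \<tau>] by simp
    qed
    then have "poly P 0 = K" using poly_eq_cofinite[OF finT] by blast
    then show ?thesis using P[of 0] c(1,2) by simp
  qed
  then show ?thesis by blast
qed




lemma cross_gen:
  fixes P1 P2 P3 g1 g2 g3 c1 c2 c3 :: complex
  assumes "c1*g2 - c2*g1 = 0" "c3*g1 - c1*g3 = 0" "c2*g3 - c3*g2 = 0"
  shows "(P1*c1 + P2*c2 + P3*c3) * g1 = c1 * (P1*g1 + P2*g2 + P3*g3)"
    "(P1*c1 + P2*c2 + P3*c3) * g2 = c2 * (P1*g1 + P2*g2 + P3*g3)"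
    "(P1*c1 + P2*c2 + P3*c3) * g3 = c3 * (P1*g1 + P2*g2 + P3*g3)"
  using assms by algebra+

lemma cross_cg:
  fixes g1 g2 g3 u1 u2 u3 v1 v2 v3 :: complex
  assumes "g1*u1 + g2*u2 + g3*u3 = 0" "g1*v1 + g2*v2 + g3*v3 = 0"
  shows "(u2*v3 - u3*v2)*g2 - (u3*v1 - u1*v3)*g1 = 0"
    "(u1*v2 - u2*v1)*g1 - (u2*v3 - u3*v2)*g3 = 0"
    "(u3*v1 - u1*v3)*g3 - (u1*v2 - u2*v1)*g2 = 0"
  using assms by algebra+

lemma cross_id:
  fixes g1 g2 g3 u1 u2 u3 v1 v2 v3 P1 P2 P3 :: complex
  assumes "g1*u1 + g2*u2 + g3*u3 = 0" "g1*v1 + g2*v2 + g3*v3 = 0"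
  shows "(P1*(u2*v3 - u3*v2) + P2*(u3*v1 - u1*v3) + P3*(u1*v2 - u2*v1)) * g1 = (u2*v3 - u3*v2) * (P1*g1 + P2*g2 + P3*g3)"
    "(P1*(u2*v3 - u3*v2) + P2*(u3*v1 - u1*v3) + P3*(u1*v2 - u2*v1)) * g2 = (u3*v1 - u1*v3) * (P1*g1 + P2*g2 + P3*g3)"
    "(P1*(u2*v3 - u3*v2) + P2*(u3*v1 - u1*v3) + P3*(u1*v2 - u2*v1)) * g3 = (u1*v2 - u2*v1) * (P1*g1 + P2*g2 + P3*g3)"
  using cross_gen[OF cross_cg[OF assms]] by blast+

theorem corollary4p2:
  fixes k0 k1 u0 u1 :: complex
    and \<omega> :: "pt3 \<Rightarrow> pt3 \<Rightarrow> pt3 \<Rightarrow> complex"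
  assumes "k0 \<noteq> 0" "k1 \<noteq> 0" "u0 \<noteq> 0" "u1 \<noteq> 0"
    and "smooth_Ct k0 k1 u0 u1"
    and "algebraic_symplectic k0 k1 u0 u1 \<omega>"
  shows "\<exists>c::complex. \<forall>p \<in> Ct k0 k1 u0 u1. dR3 k0 k1 u0 u1 p \<noteq> 0 \<longrightarrow>
           (\<forall>u \<in> tangent k0 k1 u0 u1 p. \<forall>v \<in> tangent k0 k1 u0 u1 p.
              \<omega> p u v = c * Omega k0 k1 u0 u1 p u v)"
proof -
  have A2: "algebraic_2form k0 k1 u0 u1 \<omega>" using assms(6) unfolding algebraic_symplectic_def by (rule conjunct1)
  have nd0: "\<forall>p \<in> Ct k0 k1 u0 u1. \<forall>u \<in> tangent k0 k1 u0 u1 p. u \<noteq> (0, 0, 0) \<longrightarrow>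
        (\<exists>v \<in> tangent k0 k1 u0 u1 p. \<omega> p u v \<noteq> 0)"
    using assms(6) unfolding algebraic_symplectic_def by (rule conjunct2)
  obtain P1 P2 P3 where P: "poly3 P1" "poly3 P2" "poly3 P3"
    and rep0: "\<forall>p \<in> Ct k0 k1 u0 u1. \<forall>u \<in> tangent k0 k1 u0 u1 p. \<forall>v \<in> tangent k0 k1 u0 u1 p.
          (case (u, v) of ((a1, a2, a3), (b1, b2, b3)) \<Rightarrow>
             \<omega> p u v = P1 p * (a2 * b3 - a3 * b2) + P2 p * (a3 * b1 - a1 * b3)
                      + P3 p * (a1 * b2 - a2 * b1))"
    using A2 unfolding algebraic_2form_def by (elim exE conjE) (rule that)
  have rep: "(case (u, v) of ((a1, a2, a3), (b1, b2, b3)) \<Rightarrow>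
             \<omega> p u v = P1 p * (a2 * b3 - a3 * b2) + P2 p * (a3 * b1 - a1 * b3)
                      + P3 p * (a1 * b2 - a2 * b1))"
    if "p \<in> Ct k0 k1 u0 u1" "u \<in> tangent k0 k1 u0 u1 p" "v \<in> tangent k0 k1 u0 u1 p" for p u v
    using rep0 that by (elim ballE) auto
  have nondeg: "\<exists>v \<in> tangent k0 k1 u0 u1 p. \<omega> p u v \<noteq> 0"
    if "p \<in> Ct k0 k1 u0 u1" "u \<in> tangent k0 k1 u0 u1 p" "u \<noteq> (0, 0, 0)" for p u
    using nd0 that by blast
  define g1 where "g1 = dR1 k0 k1 u0 u1"
  define g2 where "g2 = dR2 k0 k1 u0 u1"
  define g3 where "g3 = dR3 k0 k1 u0 u1"
  define f where "f p = P1 p * g1 p + P2 p * g2 p + P3 p * g3 p" for p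
  have pg1: "poly3 g1"
  proof -
    have "g1 = (\<lambda>p. fst (snd p) * snd (snd p) + ((-2) * fst p + (bar u0 * bar k0 + bar k1 * bar u1)))"
      unfolding g1_def dR1_def by (auto split: prod.splits)
    then show ?thesis by (simp only:) (intro poly3.intros)
  qed
  have pg2: "poly3 g2"
  proof -
    have "g2 = (\<lambda>p. fst p * snd (snd p) + ((-2) * fst (snd p) + (bar u1 * bar u0 + bar k0 * bar k1)))"
      unfolding g2_def dR2_def by (auto split: prod.splits)
    then show ?thesis by (simp only:) (intro poly3.intros)
  qed
  have pg3: "poly3 g3"
  proof -
    have "g3 = (\<lambda>p. fst p * fst (snd p) + ((-2) * snd (snd p) + (bar k0 * bar u1 + bar k1 * bar u0)))"
      unfolding g3_def dR3_def by (auto split: prod.splits)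
    then show ?thesis by (simp only:) (intro poly3.intros)
  qed
  have pf: "poly3 f" unfolding f_def using P pg1 pg2 pg3 by (intro poly3.intros)
  have tang: "u \<in> tangent k0 k1 u0 u1 p \<longleftrightarrow> g1 p * fst u + g2 p * fst (snd u) + g3 p * snd (snd u) = 0" for u p
    unfolding tangent_def g1_def g2_def g3_def by (cases u) auto
  have omega_eq: "\<omega> p u v * g1 p = (fst (snd u) * snd (snd v) - snd (snd u) * fst (snd v)) * f p"
    "\<omega> p u v * g2 p = (snd (snd u) * fst v - fst u * snd (snd v)) * f p"
    "\<omega> p u v * g3 p = (fst u * fst (snd v) - fst (snd u) * fst v) * f p"
    if "p \<in> Ct k0 k1 u0 u1" "u \<in> tangent k0 k1 u0 u1 p" "v \<in> tangent k0 k1 u0 u1 p" for p u v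
  proof -
    obtain a1 a2 a3 where u: "u = (a1, a2, a3)" by (cases u)
    obtain b1 b2 b3 where v: "v = (b1, b2, b3)" by (cases v)
    have w: "\<omega> p u v = P1 p * (a2 * b3 - a3 * b2) + P2 p * (a3 * b1 - a1 * b3) + P3 p * (a1 * b2 - a2 * b1)"
      using rep[OF that] unfolding u v by simp
    have tu: "g1 p * a1 + g2 p * a2 + g3 p * a3 = 0" using that(2) tang u by simp
    have tv: "g1 p * b1 + g2 p * b2 + g3 p * b3 = 0" using that(3) tang v by simp
    show "\<omega> p u v * g1 p = (fst (snd u) * snd (snd v) - snd (snd u) * fst (snd v)) * f p"
      "\<omega> p u v * g2 p = (snd (snd u) * fst v - fst u * snd (snd v)) * f p"
      "\<omega> p u v * g3 p = (fst u * fst (snd v) - fst (snd u) * fst v) * f p"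
      unfolding f_def using cross_id[OF tu tv, of "P1 p" "P2 p" "P3 p"] w u v by simp_all
  qed
  define A0 where "A0 = bar u0 * bar k0 + bar k1 * bar u1"
  define B0 where "B0 = bar u1 * bar u0 + bar k0 * bar k1"
  define C0 where "C0 = bar k0 * bar u1 + bar k1 * bar u0"
  define E0 where "E0 = (bar k0)^2 + (bar k1)^2 + (bar u0)^2 + (bar u1)^2 - bar k0 * bar k1 * bar u0 * bar u1 + 4"
  have RR: "Rt k0 k1 u0 u1 (x, y, z) = Rg A0 B0 C0 E0 x y z" for x y z
    unfolding Rt_def Rg_def A0_def B0_def C0_def E0_def by (simp add: algebra_simps)
  have fnz: "f p \<noteq> 0" if p: "p \<in> Ct k0 k1 u0 u1" for p
  proof
    assume f0: "f p = 0"
    have gnz: "(g1 p, g2 p, g3 p) \<noteq> (0, 0, 0)"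
      using assms(5) p unfolding smooth_Ct_def g1_def g2_def g3_def by blast
    define u where "u = (if g1 p \<noteq> 0 then (g2 p, - g1 p, 0) else (1, 0, 0 :: complex))"
    have ut: "u \<in> tangent k0 k1 u0 u1 p" unfolding tang u_def by (auto simp: algebra_simps)
    have un: "u \<noteq> (0, 0, 0)" unfolding u_def by auto
    obtain v where v: "v \<in> tangent k0 k1 u0 u1 p" "\<omega> p u v \<noteq> 0" using nondeg[OF p ut un] by blast
    have "\<omega> p u v * g1 p = 0" "\<omega> p u v * g2 p = 0" "\<omega> p u v * g3 p = 0"
      using omega_eq[OF p ut v(1)] f0 by simp_all
    then show False using v(2) gnz by auto
  qed
  have "\<exists>K. \<forall>x y z. Rg A0 B0 C0 E0 x y z = 0 \<longrightarrow> f (x, y, z) = K"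
  proof (rule units_const[OF pf])
    fix x y z assume "Rg A0 B0 C0 E0 x y z = 0"
    then have "(x, y, z) \<in> Ct k0 k1 u0 u1" unfolding Ct_def using RR by simp
    then show "f (x, y, z) \<noteq> 0" by (rule fnz)
  qed
  then obtain K where K: "\<And>x y z. Rg A0 B0 C0 E0 x y z = 0 \<Longrightarrow> f (x, y, z) = K" by blast
  have fK: "f p = K" if "p \<in> Ct k0 k1 u0 u1" for p
  proof -
    obtain x y z where p: "p = (x, y, z)" by (cases p)
    then have "Rg A0 B0 C0 E0 x y z = 0" using that RR unfolding Ct_def by simp
    then show ?thesis using K p by simp
  qed
  show ?thesis
  proof (intro exI[of _ K] ballI impI)
    fix p u v assume p: "p \<in> Ct k0 k1 u0 u1" and d3: "dR3 k0 k1 u0 u1 p \<noteq> 0"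
      and u: "u \<in> tangent k0 k1 u0 u1 p" and v: "v \<in> tangent k0 k1 u0 u1 p"
    have "\<omega> p u v * g3 p = (fst u * fst (snd v) - fst (snd u) * fst v) * K"
      using omega_eq(3)[OF p u v] fK[OF p] by simp
    then have "\<omega> p u v = (fst u * fst (snd v) - fst (snd u) * fst v) * K / g3 p"
      using d3 unfolding g3_def by (simp add: field_simps)
    moreover have "Omega k0 k1 u0 u1 p u v = (fst u * fst (snd v) - fst (snd u) * fst v) / g3 p"
      unfolding Omega_def g3_def by (cases u; cases v) auto
    ultimately show "\<omega> p u v = K * Omega k0 k1 u0 u1 p u v" by simp
  qed
qed



end
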